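(* Let $n\geq k\geq 3$ be odd integers with $\gcd(n,k-1)=1$. Then there exists a diagonal $\mathrm{M}^0_{\mathbb Z_k\oplus\mathbb Z_n}(n,n;k,k)$.
   Context: Let $(\Gamma,+)$ be an abelian group. A partially filled array is an array in which some cells may be empty. A zero-sum magic partially filled array $\mathrm{M}^0_\Gamma(n,n;k,k)$ is an $n\times n$ partially filled array with entries in $\Gamma$ in which every element of $\Gamma$ appears exactly once, each row and each column contains exactly $k$ filled cells, and the entries of each row and of each column sum to $0_\Gamma$. For an $n\times n$ partially filled array, cell $(i,j)$ belongs to the diagonal $D_r$ if $j-i\equiv r\pmod n$; such an array is diagonal if its nonempty cells are exactly those of $k$ consecutive diagonals (indices mod $n$). $\mathbb Z_N$ is the cyclic group of order $N$. *)

theory Defs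
  imports Main
begin

text \<open>The group Z_a (+) Z_b, realised on the carrier {0..<a} x {0..<b} with
componentwise addition mod a and mod b.  A partially filled n x n array is a
function from row/column indices (< n) to optional group elements (None = empty).\<close>

definition cyc_pair_carrier :: "nat \<Rightarrow> nat \<Rightarrow> (nat \<times> nat) set" where
  "cyc_pair_carrier a b = {0..<a} \<times> {0..<b}"

definition filled_row :: "nat \<Rightarrow> (nat \<Rightarrow> nat \<Rightarrow> (nat \<times> nat) option) \<Rightarrow> nat \<Rightarrow> nat set" where
  "filled_row n A i = {j. j < n \<and> A i j \<noteq> None}"

definition filled_col :: "nat \<Rightarrow> (nat \<Rightarrow> nat \<Rightarrow> (nat \<times> nat) option) \<Rightarrow> nat \<Rightarrow> nat set" where
  "filled_col n A j = {i. i < n \<and> A i j \<noteq> None}"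

definition zero_sum_magic ::
  "nat \<Rightarrow> nat \<Rightarrow> nat \<Rightarrow> nat \<Rightarrow> (nat \<Rightarrow> nat \<Rightarrow> (nat \<times> nat) option) \<Rightarrow> bool" where
  "zero_sum_magic a b n k A \<longleftrightarrow>
     (\<forall>i j. A i j \<noteq> None \<longrightarrow> i < n \<and> j < n) \<and>
     (\<forall>i j g. A i j = Some g \<longrightarrow> g \<in> cyc_pair_carrier a b) \<and>
     (\<forall>g \<in> cyc_pair_carrier a b. \<exists>!p. fst p < n \<and> snd p < n \<and> A (fst p) (snd p) = Some g) \<and>
     (\<forall>i < n. card (filled_row n A i) = k) \<and>
     (\<forall>j < n. card (filled_col n A j) = k) \<and>
     (\<forall>i < n. (\<Sum>j \<in> filled_row n A i. fst (the (A i j))) mod a = 0 \<and>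
              (\<Sum>j \<in> filled_row n A i. snd (the (A i j))) mod b = 0) \<and>
     (\<forall>j < n. (\<Sum>i \<in> filled_col n A j. fst (the (A i j))) mod a = 0 \<and>
              (\<Sum>i \<in> filled_col n A j. snd (the (A i j))) mod b = 0)"

definition diagonal_array :: "nat \<Rightarrow> nat \<Rightarrow> (nat \<Rightarrow> nat \<Rightarrow> (nat \<times> nat) option) \<Rightarrow> bool" where
  "diagonal_array n k A \<longleftrightarrow>
     (\<exists>r < n. \<forall>i < n. \<forall>j < n.
        A i j \<noteq> None \<longleftrightarrow> (\<exists>t < k. (j + n - i) mod n = (r + t) mod n))"

end

theory Submission
  imports Defs "HOL-Number_Theory.Cong"
begin

definition aa :: "nat \<Rightarrow> nat \<Rightarrow> nat \<Rightarrow> nat" where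
  "aa n m t = (if t = m then (n-1)*(2*m) else 1)"

definition AA :: "nat \<Rightarrow> nat \<Rightarrow> nat \<Rightarrow> nat \<Rightarrow> (nat \<times> nat) option" where
  "AA n m i j = (if i < n \<and> j < n \<and> (j+n-i) mod n < 2*m+1
     then Some ((j+n-i) mod n, (aa n m ((j+n-i) mod n) * i) mod n) else None)"

lemma mod2: "(x::nat) < 2*n \<Longrightarrow> x mod n = (if x < n then x else x - n)"
  by (simp add: le_mod_geq)

lemma gauss2: "2 * (\<Sum>t<Suc (N::nat). t) = N * (N + 1)"
  by (induction N) (simp_all add: algebra_simps)

lemma modA: "(x::nat) < n \<Longrightarrow> x mod n = x" by simp
lemma modB: "n \<le> (x::nat) \<Longrightarrow> x < 2*n \<Longrightarrow> x mod n = x - n"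
  by (simp add: le_mod_geq)

context
  fixes n m :: nat
  assumes kn: "2*m+1 \<le> n" and m1: "1 \<le> m" and cop: "coprime n (2*m)"
begin

lemma rowfact: "i < n \<Longrightarrow> t < 2*m+1 \<Longrightarrow> ((i+t) mod n + n - i) mod n = t"
proof (cases "i + t < n")
  case True assume "i < n" "t < 2*m+1"
  then show ?thesis using True kn modB[of n "i+t+n-i"] by simp
next
  case False assume "i < n" "t < 2*m+1"
  then have "(i+t) mod n = i+t-n" using kn False by (intro modB) auto
  then show ?thesis using False kn \<open>i<n\<close> \<open>t < 2*m+1\<close> by simp
qed

lemma rowfact2: "i < n \<Longrightarrow> j < n \<Longrightarrow> (i + (j+n-i) mod n) mod n = j"
proof (cases "j < i")
  case True assume "i < n" "j < n"
  then show ?thesis using True by simp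
next
  case False assume "i < n" "j < n"
  then have "(j+n-i) mod n = j-i" using False by (subst modB) auto
  then show ?thesis using False \<open>j<n\<close> by simp
qed

lemma colfact: "j < n \<Longrightarrow> t < 2*m+1 \<Longrightarrow> (j + n - (j+n-t) mod n) mod n = t"
proof (cases "j < t")
  case True assume "j < n" "t < 2*m+1"
  then have "(j+n-t) mod n = j+n-t" using True by (intro modA) auto
  then show ?thesis using True kn \<open>t < 2*m+1\<close> by simp
next
  case False assume "j < n" "t < 2*m+1"
  then have "(j+n-t) mod n = j-t" using False by (subst modB) auto
  then show ?thesis using False \<open>j<n\<close> kn \<open>t < 2*m+1\<close> by (subst modB) auto
qed

lemma colfact2: "i < n \<Longrightarrow> j < n \<Longrightarrow> (j + n - (j+n-i) mod n) mod n = i"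
proof (cases "j < i")
  case True assume "i < n" "j < n"
  then have "(j+n-i) mod n = j+n-i" using True by (intro modA) auto
  then show ?thesis using True \<open>i < n\<close> by simp
next
  case False assume "i < n" "j < n"
  then have "(j+n-i) mod n = j-i" using False by (subst modB) auto
  then show ?thesis using False \<open>j<n\<close> \<open>i<n\<close> by (subst modB) auto
qed

lemma row_bij: "i < n \<Longrightarrow> bij_betw (\<lambda>t. (i+t) mod n) {..<2*m+1} (filled_row n (AA n m) i)"
  apply (rule bij_betw_byWitness[where f'="\<lambda>j. (j+n-i) mod n"])
  using kn by (auto simp: filled_row_def AA_def rowfact rowfact2)

lemma col_bij: "j < n \<Longrightarrow> bij_betw (\<lambda>t. (j+n-t) mod n) {..<2*m+1} (filled_col n (AA n m) j)"
  apply (rule bij_betw_byWitness[where f'="\<lambda>i. (j+n-i) mod n"])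
  using kn by (auto simp: filled_col_def AA_def colfact colfact2)

lemma sum_if: "finite S \<Longrightarrow> m \<in> S \<Longrightarrow> (\<Sum>t\<in>S. (if t = m then c else f t)) = c + (\<Sum>t\<in>S-{m}. f t)"
  by (simp add: sum.remove)

lemma sum_aa: "(\<Sum>t<2*m+1. aa n m t) = n * (2*m)"
proof -
  have "(\<Sum>t<2*m+1. aa n m t) = (n-1)*(2*m) + (\<Sum>t\<in>{..<2*m+1}-{m}. 1)"
    unfolding aa_def by (rule sum_if) auto
  also have "\<dots> = (n-1)*(2*m) + 2*m" by simp
  also have "\<dots> = n*(2*m)" using kn by (cases n) (auto simp: algebra_simps)
  finally show ?thesis .
qed

lemma sum_aat: "(\<Sum>t<2*m+1. aa n m t * t) = n * (2*m) * m"
proof -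
  have "(\<Sum>t<2*m+1. aa n m t * t) = (\<Sum>t<2*m+1. if t = m then (n-1)*(2*m)*m else t)"
    unfolding aa_def by (rule sum.cong) auto
  also have "\<dots> = (n-1)*(2*m)*m + (\<Sum>t\<in>{..<2*m+1}-{m}. t)"
    by (rule sum_if) auto
  also have "(\<Sum>t\<in>{..<2*m+1}-{m}. t) = (\<Sum>t<2*m+1. t) - m"
    by (subst sum_diff_nat) auto
  also have "(\<Sum>t<2*m+1. t) = (2*m+1)*m"
    using gauss2[of "2*m"] by simp
  finally show ?thesis using kn by (cases n) (auto simp: algebra_simps)
qed

lemma cop_aa: "coprime (aa n m t) n"
proof -
  have "coprime (n-1) n" using kn coprime_diff_one_left_nat[of n] by simp
  moreover have "coprime (2*m) n" using cop by (simp add: ac_simps)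
  ultimately show ?thesis unfolding aa_def by simp
qed

lemma aa_inj: "i < n \<Longrightarrow> i' < n \<Longrightarrow> (aa n m t * i) mod n = (aa n m t * i') mod n \<Longrightarrow> i = i'"
  by (metis cong_def cong_less_modulus_unique_nat cong_mult_lcancel_nat cop_aa)

lemma aa_surj: "v < n \<Longrightarrow> \<exists>i<n. (aa n m t * i) mod n = v"
proof -
  assume v: "v < n"
  have img: "(\<lambda>i. (aa n m t * i) mod n) ` {..<n} = {..<n}"
  proof (rule endo_inj_surj)
    show "finite {..<n}" by simp
    show "(\<lambda>i. (aa n m t * i) mod n) ` {..<n} \<subseteq> {..<n}" using kn by (simp add: image_subset_iff)
    show "inj_on (\<lambda>i. (aa n m t * i) mod n) {..<n}"
    proof (rule inj_onI)
      fix x y assume xy: "x \<in> {..<n}" "y \<in> {..<n}" and eq: "(aa n m t * x) mod n = (aa n m t * y) mod n"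
      have "x < n" "y < n" using xy by auto
      then show "x = y" using eq by (rule aa_inj)
    qed
  qed
  have "v \<in> (\<lambda>i. (aa n m t * i) mod n) ` {..<n}" unfolding img using v by simp
  then obtain i where "i \<in> {..<n}" "v = (aa n m t * i) mod n" by (rule imageE)
  then show ?thesis by auto
qed

lemma magic: "zero_sum_magic (2*m+1) n n (2*m+1) (AA n m)"
  unfolding zero_sum_magic_def
proof (intro conjI ballI allI impI)
  fix i j assume "AA n m i j \<noteq> None" then show "i < n" "j < n" by (auto simp: AA_def split: if_splits)
next
  fix i j g assume "AA n m i j = Some g" then show "g \<in> cyc_pair_carrier (2*m+1) n"
    using kn by (auto simp: AA_def cyc_pair_carrier_def split: if_splits)
next
  fix g assume g: "g \<in> cyc_pair_carrier (2*m+1) n"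
  obtain t v where gv: "g = (t, v)" "t < 2*m+1" "v < n" using g by (auto simp: cyc_pair_carrier_def)
  obtain i0 where i0: "i0 < n" "(aa n m t * i0) mod n = v" using aa_surj gv by blast
  show "\<exists>!p. fst p < n \<and> snd p < n \<and> AA n m (fst p) (snd p) = Some g"
  proof (rule ex1I[where a="(i0, (i0+t) mod n)"])
    show "fst (i0, (i0+t) mod n) < n \<and> snd (i0, (i0+t) mod n) < n \<and> AA n m (fst (i0, (i0+t) mod n)) (snd (i0, (i0+t) mod n)) = Some g"
      using i0 gv kn by (auto simp: AA_def rowfact)
  next
    fix p assume p: "fst p < n \<and> snd p < n \<and> AA n m (fst p) (snd p) = Some g"
    obtain a b where ab: "p = (a, b)" by (cases p)
    have d: "(b+n-a) mod n = t" and e: "(aa n m t * a) mod n = v" "a < n" "b < n"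
      using p gv by (auto simp: ab AA_def split: if_splits)
    have "a = i0" using aa_inj e i0 by metis
    moreover have "b = (a+t) mod n" using rowfact2[of a b] e d by simp
    ultimately show "p = (i0, (i0+t) mod n)" using ab by simp
  qed
next
  fix i assume i: "i < n"
  show "card (filled_row n (AA n m) i) = 2*m+1"
    using bij_betw_same_card[OF row_bij[OF i]] by simp
next
  fix j assume j: "j < n"
  show "card (filled_col n (AA n m) j) = 2*m+1"
    using bij_betw_same_card[OF col_bij[OF j]] by simp
next
  fix i assume i: "i < n"
  have r: "(\<Sum>j \<in> filled_row n (AA n m) i. f (the (AA n m i j))) =
        (\<Sum>t<2*m+1. f (t, (aa n m t * i) mod n))" for f
    apply (subst sum.reindex_bij_betw[OF row_bij[OF i], symmetric])
    apply (rule sum.cong)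
    using i kn by (auto simp: AA_def rowfact)
  have s1: "(\<Sum>t<2*m+1. t) = (2*m+1)*m" using gauss2[of "2*m"] by simp
  have e: "(\<Sum>j \<in> filled_row n (AA n m) i. fst (the (AA n m i j))) = (2*m+1)*m"
    using r[of fst] s1 by (simp del: sum.lessThan_Suc)
  show "(\<Sum>j \<in> filled_row n (AA n m) i. fst (the (AA n m i j))) mod (2*m+1) = 0"
    unfolding e by (metis mod_mult_self1_is_0)
  have "(\<Sum>t<2*m+1. (aa n m t * i) mod n) mod n = (\<Sum>t<2*m+1. aa n m t * i) mod n"
    by (rule mod_sum_eq)
  also have "(\<Sum>t<2*m+1. aa n m t * i) = n*(2*m)*i" by (simp only: sum_distrib_right[symmetric] sum_aa)
  also have "n*(2*m)*i mod n = 0" by (metis dvd_triv_left mult.assoc dvd_imp_mod_0)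
  finally have F: "(\<Sum>t<2*m+1. (aa n m t * i) mod n) mod n = 0" .
  have rs: "(\<Sum>j \<in> filled_row n (AA n m) i. snd (the (AA n m i j))) = (\<Sum>t<2*m+1. (aa n m t * i) mod n)"
    using r[of snd] by (simp del: sum.lessThan_Suc)
  show "(\<Sum>j \<in> filled_row n (AA n m) i. snd (the (AA n m i j))) mod n = 0"
    unfolding rs by (rule F)
next
  fix j assume j: "j < n"
  have r: "(\<Sum>i \<in> filled_col n (AA n m) j. f (the (AA n m i j))) =
        (\<Sum>t<2*m+1. f (t, (aa n m t * ((j+n-t) mod n)) mod n))" for f
    apply (subst sum.reindex_bij_betw[OF col_bij[OF j], symmetric])
    apply (rule sum.cong)
    using j kn by (auto simp: AA_def colfact)
  have s1: "(\<Sum>t<2*m+1. t) = (2*m+1)*m" using gauss2[of "2*m"] by simp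
  have e: "(\<Sum>i \<in> filled_col n (AA n m) j. fst (the (AA n m i j))) = (2*m+1)*m"
    using r[of fst] s1 by (simp del: sum.lessThan_Suc)
  show "(\<Sum>i \<in> filled_col n (AA n m) j. fst (the (AA n m i j))) mod (2*m+1) = 0"
    unfolding e by (metis mod_mult_self1_is_0)
  have "(\<Sum>t<2*m+1. (aa n m t * ((j+n-t) mod n)) mod n) mod n
      = (\<Sum>t<2*m+1. (aa n m t * (j+n-t)) mod n) mod n"
    by (simp add: mod_mult_right_eq)
  also have "\<dots> = (\<Sum>t<2*m+1. aa n m t * (j+n-t)) mod n"
    by (rule mod_sum_eq)
  also have "\<dots> = 0"
  proof -
    have "(\<Sum>t<2*m+1. aa n m t * (j+n-t)) + (\<Sum>t<2*m+1. aa n m t * t)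
        = (\<Sum>t<2*m+1. aa n m t * (j+n))"
      unfolding sum.distrib[symmetric]
    proof (rule sum.cong)
      fix t assume "t \<in> {..<2*m+1}"
      then have "t \<le> j + n" using kn by simp
      then have "j + n - t + t = j + n" by simp
      have "aa n m t * (j+n-t) + aa n m t * t = aa n m t * (j+n-t+t)"
        by (simp only: add_mult_distrib2)
      then show "aa n m t * (j+n-t) + aa n m t * t = aa n m t * (j+n)"
        using \<open>j + n - t + t = j + n\<close> arg_cong[of "j+n-t+t" "j+n" "\<lambda>x. aa n m t * x"]
        by (metis (no_types))
    qed simp
    also have "\<dots> = n*(2*m)*(j+n)" by (simp only: sum_distrib_right[symmetric] sum_aa)
    finally have eq: "(\<Sum>t<2*m+1. aa n m t * (j+n-t)) + (\<Sum>t<2*m+1. aa n m t * t) = n*(2*m)*(j+n)" .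
    have d1: "n dvd (\<Sum>t<2*m+1. aa n m t * (j+n-t)) + (\<Sum>t<2*m+1. aa n m t * t)"
      unfolding eq by (metis dvd_triv_left mult.assoc)
    have d2: "n dvd (\<Sum>t<2*m+1. aa n m t * t)" unfolding sum_aat by (metis dvd_triv_left mult.assoc)
    have "n dvd (\<Sum>t<2*m+1. aa n m t * (j+n-t))" using d1 d2 by (metis dvd_add_left_iff)
    then show ?thesis by (rule dvd_imp_mod_0)
  qed
  finally have F: "(\<Sum>t<2*m+1. (aa n m t * ((j+n-t) mod n)) mod n) mod n = 0" .
  have rs: "(\<Sum>i \<in> filled_col n (AA n m) j. snd (the (AA n m i j))) = (\<Sum>t<2*m+1. (aa n m t * ((j+n-t) mod n)) mod n)"
    using r[of snd] by (simp del: sum.lessThan_Suc)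
  show "(\<Sum>i \<in> filled_col n (AA n m) j. snd (the (AA n m i j))) mod n = 0"
    unfolding rs by (rule F)
qed

lemma diag: "diagonal_array n (2*m+1) (AA n m)"
  unfolding diagonal_array_def
proof (rule exI[where x=0], intro conjI allI impI)
  show "0 < n" using kn by simp
  fix i j assume "i < n" "j < n"
  show "(AA n m i j \<noteq> None) = (\<exists>t<2*m+1. (j + n - i) mod n = (0 + t) mod n)"
  proof
    assume "AA n m i j \<noteq> None"
    then have "(j+n-i) mod n < 2*m+1" by (simp add: AA_def split: if_splits)
    moreover have "(j+n-i) mod n mod n = (j+n-i) mod n" by simp
    ultimately show "\<exists>t<2*m+1. (j + n - i) mod n = (0 + t) mod n" by (metis add_0)
  next
    assume "\<exists>t<2*m+1. (j + n - i) mod n = (0 + t) mod n"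
    then obtain t where "t < 2*m+1" "(j + n - i) mod n = t mod n" by auto
    moreover have "t mod n = t" using \<open>t < 2*m+1\<close> kn by simp
    ultimately show "AA n m i j \<noteq> None" using \<open>i<n\<close> \<open>j<n\<close> by (simp add: AA_def)
  qed
qed

end

theorem mainTheorem10:
  fixes n k :: nat
  assumes "odd n" and "odd k" and "3 \<le> k" and "k \<le> n" and "coprime n (k - 1)"
  shows "\<exists>A. zero_sum_magic k n n k A \<and> diagonal_array n k A"
proof -
  obtain m where k: "k = 2*m+1" using assms(2) oddE by blast
  have "1 \<le> m" using assms(3) k by simp
  moreover have "2*m+1 \<le> n" using assms(4) k by simp
  moreover have "coprime n (2*m)" using assms(5) k by simp
  ultimately have "zero_sum_magic (2*m+1) n n (2*m+1) (AA n m) \<and> diagonal_array n (2*m+1) (AA n m)"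
    using magic[of m n] diag[of m n] by blast
  then show ?thesis unfolding k by blast
qed

end
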